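(* For every integer $k\ge1$, $$\tilde H_{2k+2}=\frac{2(k+1)}{4^k\tilde\omega^{2k+2}}\,[1+(-1)^{k+1}]\int_0^\infty e^{-t}f_1(i,t)\,t^{2k+1}\,dt,$$ where $e^{-t}f_1(i,t)=\dfrac{1+\cos t}{4(\cosh t-\cos t)}$. Equivalently, for $k\ge1$, $\tilde H_{4k}=\dfrac{8k}{4^{2k-1}\tilde\omega^{4k}}\displaystyle\int_0^\infty e^{-t}f_1(i,t)t^{4k-1}dt$ and $\tilde H_{4k+2}=0$.
   Context: Let $\tilde\omega=2\int_0^1\frac{dx}{\sqrt{1-x^4}}=\frac{\sqrt\pi}{2}\frac{\Gamma(1/4)}{\Gamma(3/4)}$, and let $\wp$ be the Weierstrass elliptic function with period lattice $\tilde\omega\mathbb Z+\tilde\omega i\mathbb Z$ (so $\wp'^2=4\wp^3-4\wp$). The Hurwitz numbers $\tilde H_n$ ($n\ge2$) are defined by the Laurent expansion $\wp(z)=\frac1{z^2}+\sum_{n\ge2}\frac{2^n\tilde H_n}{n}\frac{z^{n-2}}{(n-2)!}$ about $z=0$. Here $f_1(i,t)=\dfrac{\cos^2(t/2)}{1-2e^{-t}\cos t+e^{-2t}}$. *)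

theory Defs
  imports "HOL-Analysis.Analysis"
begin

definition omega_t :: real where
  "omega_t = 2 * integral {0..1} (\<lambda>x::real. 1 / sqrt (1 - x ^ 4))"

definition lat_pt :: "int \<times> int \<Rightarrow> complex" where
  "lat_pt p = complex_of_real omega_t * (of_int (fst p) + \<i> * of_int (snd p))"

text \<open>Regular part of the Weierstrass function for the lattice omega Z + omega i Z:
  wp z = 1/z^2 + wp_reg z, with wp_reg z = sum over nonzero lattice points w of
  1/(z-w)^2 - 1/w^2.\<close>
definition wp_reg :: "complex \<Rightarrow> complex" where
  "wp_reg z = infsum (\<lambda>p. 1 / (z - lat_pt p)^2 - 1 / (lat_pt p)^2) (UNIV - {(0,0)})"

text \<open>Hurwitz numbers: wp z = 1/z^2 + sum_{n>=2} (2^n H_n / n) z^(n-2)/(n-2)!,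
  i.e. the (n-2)-th derivative at 0 of the regular part equals 2^n H_n / n.\<close>
definition Hurwitz :: "nat \<Rightarrow> complex" where
  "Hurwitz n = of_nat n / 2 ^ n * (deriv ^^ (n - 2)) wp_reg 0"

definition f1_i :: "real \<Rightarrow> real" where
  "f1_i t = (cos (t / 2))^2 / (1 - 2 * exp (-t) * cos t + exp (-2 * t))"

end

theory Submission
  imports Defs "HOL-Real_Asymp.Real_Asymp"
begin

fun antider :: "nat \<Rightarrow> 'a::{real_normed_field,banach} \<Rightarrow> real \<Rightarrow> 'a" where
  "antider 0 z t = - exp (- z * of_real t) / z"
| "antider (Suc n) z t = - ((of_real t :: 'a) ^ Suc n * exp (- z * of_real t) / z) + of_nat (Suc n) / z * antider n z t"

lemma exp_lin_vderiv:
  fixes z :: "'a::{real_normed_field,banach}"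
  shows "((\<lambda>t. exp (- (z * of_real t))) has_vector_derivative (- (z * exp (- (z * of_real t))))) (at t)"
proof -
  have "((\<lambda>t. - z * of_real t) has_vector_derivative (- z)) (at t)"
    by (auto intro!: derivative_eq_intros)
  from field_vector_diff_chain_at[OF this DERIV_exp]
  show ?thesis by (simp add: o_def)
qed

lemma exp_lin_vderiv':
  fixes z :: "'a::{real_normed_field,banach}"
  shows "((\<lambda>t. exp (- z * of_real t)) has_vector_derivative (- z * exp (- z * of_real t))) (at t)"
  using exp_lin_vderiv[of z t] by simp

lemma ofreal_pow_vderiv:
  shows "((\<lambda>t. (of_real t :: 'a::{real_normed_field,banach}) ^ Suc n) has_vector_derivative (of_nat (Suc n) * of_real t ^ n)) (at t)"
proof -
  have "((\<lambda>t. (of_real t :: 'a)) has_vector_derivative 1) (at t)"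
    by (auto intro!: derivative_eq_intros)
  from field_vector_diff_chain_at[OF this DERIV_power_Suc[OF DERIV_ident, where x="of_real t :: 'a" and s=UNIV and n=n]]
  show ?thesis by (simp add: o_def algebra_simps)
qed

lemma antider_deriv:
  fixes z :: "'a::{real_normed_field,banach}"
  assumes "z \<noteq> 0"
  shows "(antider n z has_vector_derivative (of_real t ^ n * exp (- z * of_real t))) (at t)"
proof (induction n)
  case 0
  show ?case using assms
    by (auto intro!: derivative_eq_intros exp_lin_vderiv simp: field_simps)
next
  case (Suc n)
  have "((\<lambda>t. - ((of_real t :: 'a) ^ Suc n * exp (- z * of_real t) / z)) has_vector_derivative
        (- (of_nat (Suc n) * of_real t ^ n * exp (- z * of_real t)) / z + of_real t ^ Suc n * exp (- z * of_real t))) (at t)"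
    apply (rule derivative_eq_intros ofreal_pow_vderiv exp_lin_vderiv' refl)+
    using assms by (simp add: field_simps)
  from has_vector_derivative_add[OF this has_vector_derivative_mult_right[OF Suc.IH, of "of_nat (Suc n) / z"]]
  show ?case using assms by (simp add: field_simps)
qed

lemma antider_0: "antider n z 0 = - (fact n / z ^ (Suc n))"
proof (induction n)
  case (Suc n)
  show ?case by (simp add: Suc fact_Suc power_Suc mult.commute mult.left_commute)
qed simp

lemma antider_lim:
  fixes z :: "'a::{real_normed_field,banach}"
  assumes c: "c > 0" and ne: "\<And>t. norm (exp (- (z * of_real t))) = exp (- (c * t))" and z: "z \<noteq> 0"
  shows "(antider n z \<longlongrightarrow> 0) at_top"
proof (induction n)
  case 0
  have "((\<lambda>t. exp (- c * t)) \<longlongrightarrow> 0) at_top" using c by real_asymp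
  then have "((\<lambda>t. exp (- c * t) / norm z) \<longlongrightarrow> 0) at_top" by (rule tendsto_divide_zero)
  then have "((\<lambda>t. norm (antider 0 z t)) \<longlongrightarrow> 0) at_top"
    by (simp add: norm_divide ne)
  then show ?case by (rule tendsto_norm_zero_cancel)
next
  case (Suc n)
  have "((\<lambda>t. t ^ Suc n * exp (- c * t)) \<longlongrightarrow> 0) at_top" using c by real_asymp
  then have "((\<lambda>t. t ^ Suc n * exp (- c * t) / norm z) \<longlongrightarrow> 0) at_top" by (rule tendsto_divide_zero)
  then have "((\<lambda>t. norm (- ((of_real t :: 'a) ^ Suc n * exp (- z * of_real t) / z))) \<longlongrightarrow> 0) at_top"
  proof (rule Lim_transform_eventually)
    show "\<forall>\<^sub>F t in at_top. t ^ Suc n * exp (- c * t) / norm z = norm (- ((of_real t :: 'a) ^ Suc n * exp (- z * of_real t) / z))"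
      using eventually_ge_at_top[of 0]
      by eventually_elim (simp add: norm_divide norm_mult ne norm_power)
  qed
  then have "((\<lambda>t. - ((of_real t :: 'a) ^ Suc n * exp (- z * of_real t) / z)) \<longlongrightarrow> 0) at_top"
    by (rule tendsto_norm_zero_cancel)
  from tendsto_add[OF this tendsto_mult[OF tendsto_const Suc.IH, of "of_nat (Suc n) / z"]]
  show ?case by simp
qed

lemma antider_isCont:
  fixes z :: "'a::{real_normed_field,banach}"
  assumes "z \<noteq> 0" shows "isCont (antider n z) x"
  using antider_deriv[OF assms, of n x] by (rule has_vector_derivative_continuous)

lemma mellin_real:
  fixes c :: real assumes c: "c > 0"
  shows "set_integrable lborel {0<..} (\<lambda>t. t ^ m * exp (- (c * t)))"
    and "(LINT t:{0<..}|lborel. t ^ m * exp (- (c * t))) = fact m / c ^ Suc m"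
proof -
  have D: "DERIV (antider m c) x :> x ^ m * exp (- (c * x))" for x
    using antider_deriv[of c m x] c by (simp add: has_real_derivative_iff_has_vector_derivative)
  have L0: "((antider m c \<circ> real_of_ereal) \<longlongrightarrow> antider m c 0) (at_right 0)"
    unfolding zero_ereal_def ereal_tendsto_simps
    using antider_isCont[where z=c and n=m and x=0] c by (auto simp: isCont_def intro: tendsto_mono[OF at_le])
  have Linf: "((antider m c \<circ> real_of_ereal) \<longlongrightarrow> 0) (at_left \<infinity>)"
    unfolding ereal_tendsto_simps
    by (rule antider_lim[of c]) (use c in auto)
  have *: "set_integrable lborel (einterval 0 \<infinity>) (\<lambda>t. t ^ m * exp (- (c * t)))"
          "(LBINT t=0..\<infinity>. t ^ m * exp (- (c * t))) = 0 - antider m c 0"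
    by (rule interval_integral_FTC_nonneg[OF _ _ _ _ L0 Linf]; (use D in \<open>auto intro!: continuous_intros\<close>))+
  show "set_integrable lborel {0<..} (\<lambda>t. t ^ m * exp (- (c * t)))"
    using *(1) by (simp add: zero_ereal_def)
  show "(LINT t:{0<..}|lborel. t ^ m * exp (- (c * t))) = fact m / c ^ Suc m"
    using *(2) by (simp add: interval_lebesgue_integral_0_infty antider_0)
qed

lemma mellin_complex:
  fixes z :: complex assumes z: "Re z > 0"
  shows "set_integrable lborel {0<..} (\<lambda>t. of_real t ^ m * exp (- (z * of_real t)))"
    and "(LINT t:{0<..}|lborel. of_real t ^ m * exp (- (z * of_real t))) = fact m / z ^ Suc m"
proof -
  have z0: "z \<noteq> 0" using z by auto
  show I: "set_integrable lborel {0<..} (\<lambda>t. of_real t ^ m * exp (- (z * of_real t)))"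
  proof (rule set_integrable_bound[OF mellin_real(1)[OF z, of m]])
    show "set_borel_measurable lborel {0<..} (\<lambda>t. of_real t ^ m * exp (- (z * of_real t)))"
      unfolding set_borel_measurable_def by measurable
    show "AE x in lborel. x \<in> {0<..} \<longrightarrow> norm (of_real x ^ m * exp (- (z * of_real x))) \<le> norm (x ^ m * exp (- (Re z * x)))"
      by (auto simp: norm_mult norm_power)
  qed
  have D: "((antider m z) has_vector_derivative (of_real x ^ m * exp (- (z * of_real x)))) (at x)" for x
    using antider_deriv[OF z0, of m x] by simp
  have L0: "((antider m z \<circ> real_of_ereal) \<longlongrightarrow> antider m z 0) (at_right 0)"
    unfolding zero_ereal_def ereal_tendsto_simps
    using antider_isCont[OF z0, where n=m and x=0] by (auto simp: isCont_def intro: tendsto_mono[OF at_le])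
  have Linf: "((antider m z \<circ> real_of_ereal) \<longlongrightarrow> 0) (at_left \<infinity>)"
    unfolding ereal_tendsto_simps
    by (rule antider_lim[of "Re z"]) (use z z0 in auto)
  have "(LBINT t=0..\<infinity>. of_real t ^ m * exp (- (z * of_real t))) = 0 - antider m z 0"
    by (rule interval_integral_FTC_integrable[OF _ D _ _ L0 Linf])
       (use I in \<open>auto intro!: continuous_intros simp: zero_ereal_def\<close>)
  then show "(LINT t:{0<..}|lborel. of_real t ^ m * exp (- (z * of_real t))) = fact m / z ^ Suc m"
    by (simp add: interval_lebesgue_integral_0_infty antider_0)
qed


definition gz :: "int \<times> int \<Rightarrow> complex" where
  "gz p = of_int (fst p) + \<i> * of_int (snd p)"

abbreviation LL :: "(int \<times> int) set" where "LL \<equiv> UNIV - {(0,0)}"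

lemma norm_gz_sq: "norm (gz (x,y)) ^ 2 = real_of_int x ^ 2 + real_of_int y ^ 2"
  by (simp add: gz_def cmod_def)

lemma gz_eq_0_iff: "gz p = 0 \<longleftrightarrow> p = (0,0)"
  by (cases p) (auto simp: gz_def complex_eq_iff)

lemma int_sq_ge1: "(x::int) \<noteq> 0 \<Longrightarrow> real_of_int x ^ 2 \<ge> 1"
proof -
  assume "x \<noteq> 0"
  then have "\<bar>x\<bar> \<ge> 1" by simp
  then have "\<bar>real_of_int x\<bar> \<ge> 1" by linarith
  then have "1 \<le> \<bar>real_of_int x\<bar> ^ 2" by (rule one_le_power)
  then show ?thesis by simp
qed

lemma norm_gz_ge1: assumes "p \<noteq> (0,0)" shows "norm (gz p) \<ge> 1"
proof -
  obtain x y where p: "p = (x,y)" by (cases p)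
  have "x \<noteq> 0 \<or> y \<noteq> 0" using assms p by auto
  then have "real_of_int x ^ 2 + real_of_int y ^ 2 \<ge> 1"
    using int_sq_ge1[of x] int_sq_ge1[of y] zero_le_power2[of "real_of_int x"] zero_le_power2[of "real_of_int y"]
    by linarith
  then have "norm (gz p) ^ 2 \<ge> 1" using norm_gz_sq p by simp
  then show ?thesis
    by (metis abs_norm_cancel one_le_power power2_le_imp_le norm_ge_zero one_power2 abs_one)
qed

definition bet :: "int \<Rightarrow> real" where "bet x = (1 + real_of_int \<bar>x\<bar>) powr (-3/2)"

lemma bet_nonneg: "bet x \<ge> 0" by (simp add: bet_def)

lemma bet_summable: "bet summable_on UNIV"
proof -
  have s1: "summable (\<lambda>n. real (Suc n) powr (-3/2))"
    using summable_Suc_iff[of "\<lambda>n. real n powr (-3/2)"] summable_real_powr_iff[of "-3/2"] by simp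
  have s2: "summable (\<lambda>n. real (Suc (Suc n)) powr (-3/2))"
    using summable_Suc_iff[of "\<lambda>n. real (Suc n) powr (-3/2)"] s1 by simp
  have a: "(bet \<circ> int) summable_on UNIV"
    using s1 by (subst summable_on_UNIV_nonneg_real_iff) (auto simp: bet_def o_def add.commute)
  have b: "(bet \<circ> (\<lambda>n. - int (Suc n))) summable_on UNIV"
    using s2 by (subst summable_on_UNIV_nonneg_real_iff) (auto simp: bet_def o_def add.commute)
  have a': "bet summable_on (int ` UNIV)"
    using a by (subst summable_on_reindex) (auto simp: inj_on_def)
  have b': "bet summable_on ((\<lambda>n. - int (Suc n)) ` UNIV)"
    using b by (subst summable_on_reindex) (auto simp: inj_on_def)
  have U: "(UNIV :: int set) = int ` UNIV \<union> (\<lambda>n. - int (Suc n)) ` UNIV"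
  proof -
    have "x \<in> int ` UNIV \<union> (\<lambda>n. - int (Suc n)) ` UNIV" for x :: int
    proof (cases "x \<ge> 0")
      case True then show ?thesis by (auto intro: image_eqI[of _ _ "nat x"])
    next
      case False then show ?thesis
        by (intro UnI2 image_eqI[of _ _ "nat (- x - 1)"]) auto
    qed
    then show ?thesis by auto
  qed
  show ?thesis by (subst U) (rule summable_on_union[OF a' b'])
qed

lemma bet2_summable: "(\<lambda>(x,y). bet x * bet y) summable_on (UNIV \<times> UNIV)"
proof -
  have "(\<lambda>p. bet (fst p) * bet (snd p)) summable_on Sigma UNIV (\<lambda>_. UNIV)"
  proof (rule summable_on_SigmaI)
    show "((\<lambda>y. bet (fst (x, y)) * bet (snd (x, y))) has_sum bet x * infsum bet UNIV) UNIV" for x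
      using has_sum_cmult_right[OF bet_summable[unfolded summable_iff_has_sum_infsum], of "bet x"] by simp
    show "(\<lambda>x. bet x * infsum bet UNIV) summable_on UNIV"
      using summable_on_cmult_left[OF bet_summable] by simp
  qed (auto intro: mult_nonneg_nonneg bet_nonneg)
  then show ?thesis by (simp add: case_prod_unfold)
qed


lemma powr_aux:
  fixes Q N :: real assumes N1: "N \<ge> 1" and Q: "Q \<le> (2 * N) ^ 2" and Qpos: "Q > 0"
  shows "1 / N ^ 3 \<le> 8 / Q powr (3/2)"
proof -
  have "Q powr (3/2) \<le> ((2 * N) ^ 2) powr (3/2)"
    using Q Qpos by (intro powr_mono2) auto
  also have "((2 * N) ^ 2) powr (3/2) = (2 * N) powr 3"
  proof -
    have "((2 * N) ^ 2) powr (3/2) = ((2 * N) powr 2) powr (3/2)" using N1 by simp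
    also have "\<dots> = (2 * N) powr (2 * (3/2))" by (rule powr_powr)
    finally show ?thesis by simp
  qed
  also have "\<dots> = (2 * N) ^ 3" using N1 by simp
  also have "\<dots> = 8 * N ^ 3" by (simp add: power_mult_distrib)
  finally have *: "Q powr (3/2) \<le> 8 * N ^ 3" .
  have QP: "Q powr (3/2) > 0" using Qpos by simp
  have "1 / N ^ 3 = 8 / (8 * N ^ 3)" using N1 by simp
  also have "\<dots> \<le> 8 / Q powr (3/2)" using * QP N1 by (intro divide_left_mono) (auto intro!: mult_pos_pos)
  finally show ?thesis .
qed
lemma bet_aux: fixes a b :: real assumes "a \<ge> 0" "b \<ge> 0"
  shows "(1 + a) powr (-3/2) * (1 + b) powr (-3/2) = 1 / ((1 + a) * (1 + b)) powr (3/2)"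
proof -
  have "(1 + a) powr (-3/2) * (1 + b) powr (-3/2) = ((1 + a) * (1 + b)) powr (-3/2)"
    using assms by (subst powr_mult) auto
  also have "\<dots> = 1 / ((1 + a) * (1 + b)) powr (3/2)"
    using powr_minus_divide[of "(1 + a) * (1 + b)" "3/2"] by simp
  finally show ?thesis .
qed

lemma abs_le_sq: "\<bar>r::real\<bar> \<le> 1 \<or> \<bar>r\<bar> \<le> r ^ 2"
proof (cases "\<bar>r\<bar> \<le> 1")
  case False
  then have "\<bar>r\<bar> * 1 \<le> \<bar>r\<bar> * \<bar>r\<bar>" by (intro mult_left_mono) auto
  then show ?thesis by (simp add: power2_eq_square abs_mult_self_eq)
qed simp

lemma inv_norm_gz3_le:
  assumes "p \<noteq> (0,0)"
  shows "1 / norm (gz p) ^ 3 \<le> 8 * (bet (fst p) * bet (snd p))"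
proof -
  obtain x y where p: "p = (x,y)" by (cases p)
  define N where "N = norm (gz p)"
  define s where "s = real_of_int x ^ 2 + real_of_int y ^ 2"
  have N1: "N \<ge> 1" using norm_gz_ge1[OF assms] N_def by simp
  have sN: "s = N ^ 2" using norm_gz_sq[of x y] p s_def N_def by simp
  have s1: "s \<ge> 1" using N1 sN by (simp add: one_le_power)
  have ax: "\<bar>real_of_int x\<bar> \<le> s"
  proof -
    have "\<bar>real_of_int x\<bar> \<le> 1 \<or> \<bar>real_of_int x\<bar> \<le> real_of_int x ^ 2"
      by (rule abs_le_sq)
    then show ?thesis using s1 unfolding s_def using zero_le_power2[of "real_of_int y"] by linarith
  qed
  have ay: "\<bar>real_of_int y\<bar> \<le> s"
  proof -
    have "\<bar>real_of_int y\<bar> \<le> 1 \<or> \<bar>real_of_int y\<bar> \<le> real_of_int y ^ 2"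
      by (rule abs_le_sq)
    then show ?thesis using s1 unfolding s_def using zero_le_power2[of "real_of_int x"] by linarith
  qed
  have axy: "\<bar>real_of_int x\<bar> * \<bar>real_of_int y\<bar> \<le> s"
  proof -
    have "2 * (\<bar>real_of_int x\<bar> * \<bar>real_of_int y\<bar>) \<le> \<bar>real_of_int x\<bar>^2 + \<bar>real_of_int y\<bar>^2"
      using sum_squares_bound[of "\<bar>real_of_int x\<bar>" "\<bar>real_of_int y\<bar>"] by simp
    moreover have "\<bar>real_of_int x\<bar> * \<bar>real_of_int y\<bar> \<ge> 0" by simp
    ultimately show ?thesis unfolding s_def power2_abs by linarith
  qed
  define Q where "Q = (1 + \<bar>real_of_int x\<bar>) * (1 + \<bar>real_of_int y\<bar>)"
  have Q: "Q \<le> (2 * N) ^ 2"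
  proof -
    have "Q = 1 + \<bar>real_of_int x\<bar> + \<bar>real_of_int y\<bar> + \<bar>real_of_int x\<bar> * \<bar>real_of_int y\<bar>"
      unfolding Q_def by (simp add: algebra_simps)
    moreover have "(2 * N) ^ 2 = 4 * s" by (simp add: sN power_mult_distrib)
    ultimately show ?thesis using ax ay axy s1 by linarith
  qed
  have Qpos: "Q > 0" unfolding Q_def by (simp add: add_pos_nonneg)
  have "bet x * bet y = 1 / Q powr (3/2)"
    unfolding bet_def Q_def of_int_abs by (rule bet_aux) auto
  moreover have "1 / N ^ 3 \<le> 8 / Q powr (3/2)" by (rule powr_aux[OF N1 Q Qpos])
  ultimately show ?thesis using p N_def by simp
qed


lemma lat3_summable: "(\<lambda>p. 1 / norm (gz p) ^ 3) summable_on LL"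
proof (rule summable_on_comparison_test)
  have "(\<lambda>p. bet (fst p) * bet (snd p)) summable_on UNIV"
    using bet2_summable by (simp add: case_prod_unfold)
  then have "(\<lambda>p. 8 * (bet (fst p) * bet (snd p))) summable_on UNIV"
    by (rule summable_on_cmult_right)
  then show "(\<lambda>p. 8 * (bet (fst p) * bet (snd p))) summable_on LL"
    by (rule summable_on_subset) auto
  show "1 / norm (gz p) ^ 3 \<le> 8 * (bet (fst p) * bet (snd p))" if "p \<in> LL" for p
    using inv_norm_gz3_le[of p] that by auto
qed auto

lemma latn_summable: assumes "e \<ge> 3" shows "(\<lambda>p. 1 / norm (gz p) ^ e) summable_on LL"
proof (rule summable_on_comparison_test[OF lat3_summable])
  show "1 / norm (gz p) ^ e \<le> 1 / norm (gz p) ^ 3" if "p \<in> LL" for p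
  proof -
    have N: "norm (gz p) \<ge> 1" using norm_gz_ge1[of p] that by auto
    then have "norm (gz p) ^ 3 \<le> norm (gz p) ^ e" using assms by (intro power_increasing) auto
    then show ?thesis using N by (intro divide_left_mono) (auto intro!: mult_pos_pos zero_less_power)
  qed
qed auto

definition phi :: "nat \<Rightarrow> int \<times> int \<Rightarrow> complex" where
  "phi e p = 1 / gz p ^ e"

lemma norm_phi: "norm (phi e p) = 1 / norm (gz p) ^ e"
  by (simp add: phi_def norm_divide norm_power)

lemma phi_abs_summable: "e \<ge> 3 \<Longrightarrow> (\<lambda>p. norm (phi e p)) summable_on LL"
  using latn_summable by (simp add: norm_phi)

lemma phi_summable: "e \<ge> 3 \<Longrightarrow> phi e summable_on A" if "A \<subseteq> LL"
  using abs_summable_summable[OF phi_abs_summable] summable_on_subset_banach that by blast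

definition SS :: "nat \<Rightarrow> complex" where "SS e = infsum (phi e) LL"

definition rot :: "int \<times> int \<Rightarrow> int \<times> int" where "rot p = (- snd p, fst p)"
definition unrot :: "int \<times> int \<Rightarrow> int \<times> int" where "unrot p = (snd p, - fst p)"

lemma gz_rot: "gz (rot p) = \<i> * gz p"
  by (simp add: gz_def rot_def algebra_simps)

lemma phi_rot: "phi e (rot p) = phi e p / \<i> ^ e"
  by (simp add: phi_def gz_rot power_mult_distrib)

lemma phi_rot4: "4 dvd e \<Longrightarrow> phi e (rot p) = phi e p"
proof -
  assume "4 dvd e" then obtain j where "e = 4 * j" by auto
  then have "\<i> ^ e = 1" by (simp add: power_mult)
  then show ?thesis by (simp add: phi_rot)
qed

lemma SS_rot: "SS e = SS e / \<i> ^ e"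
proof -
  have "infsum (\<lambda>p. phi e (rot p)) LL = infsum (phi e) LL"
    by (rule infsum_reindex_bij_witness[of LL unrot rot]) (auto simp: rot_def unrot_def)
  then show ?thesis
    unfolding SS_def phi_rot by (simp add: divide_inverse infsum_cmult_left')
qed

lemma SS_zero: assumes "e mod 4 = 2" shows "SS e = 0"
proof -
  have "e = 4 * (e div 4) + 2" using assms by presburger
  moreover have "\<i> ^ (4 * k + 2) = -1" for k :: nat
  proof -
    have "(\<i>::complex) ^ 4 = 1" by (simp add: power_numeral_reduce)
    then show ?thesis by (simp add: power_add power_mult)
  qed
  ultimately have "\<i> ^ e = -1" by metis
  then show ?thesis using SS_rot[of e] by simp
qed

definition cj :: "int \<times> int \<Rightarrow> int \<times> int" where "cj p = (fst p, - snd p)"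

lemma phi_cj: "phi e (cj p) = cnj (phi e p)"
  by (simp add: phi_def gz_def cj_def)

lemma SS_cnj: "cnj (SS e) = SS e"
proof -
  have "infsum (\<lambda>p. phi e (cj p)) LL = infsum (phi e) LL"
    by (rule infsum_reindex_bij_witness[of LL cj cj]) (auto simp: cj_def)
  then show ?thesis unfolding SS_def phi_cj by simp
qed


definition "DD = {p::int\<times>int. 0 < fst p \<and> - fst p < snd p \<and> snd p \<le> fst p}"
definition "D1 = {p::int\<times>int. 0 < snd p \<and> - snd p \<le> fst p \<and> fst p < snd p}"
definition "D2 = {p::int\<times>int. fst p < 0 \<and> fst p \<le> snd p \<and> snd p < - fst p}"
definition "D3 = {p::int\<times>int. snd p < 0 \<and> snd p < fst p \<and> fst p \<le> - snd p}"

lemma phi_rot4': "4 dvd e \<Longrightarrow> phi e (- b, a) = phi e (a, b)"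
  using phi_rot4[of e "(a,b)"] by (simp add: rot_def)

lemma rot_step:
  assumes "4 dvd e" "(phi e has_sum T) A"
    and "\<And>p. p \<in> A \<Longrightarrow> rot p \<in> B" "\<And>p. p \<in> B \<Longrightarrow> unrot p \<in> A"
  shows "(phi e has_sum T) B"
proof -
  have "(phi e has_sum T) A = (phi e has_sum T) B"
    by (rule has_sum_reindex_bij_witness[of A unrot rot B])
       (use assms in \<open>auto simp: rot_def unrot_def phi_rot4'\<close>)
  then show ?thesis using assms(2) by simp
qed

lemma fund_DD:
  assumes "4 dvd e" "e \<ge> 3"
  shows "(phi e has_sum SS e / 4) DD"
proof -
  define T where "T = infsum (phi e) DD"
  have h0: "(phi e has_sum T) DD"
    unfolding T_def by (rule has_sum_infsum, rule phi_summable) (use assms in \<open>auto simp: DD_def\<close>)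
  have h1: "(phi e has_sum T) D1"
    by (rule rot_step[OF assms(1) h0]) (auto simp: DD_def D1_def rot_def unrot_def)
  have h2: "(phi e has_sum T) D2"
    by (rule rot_step[OF assms(1) h1]) (auto simp: D2_def D1_def rot_def unrot_def)
  have h3: "(phi e has_sum T) D3"
    by (rule rot_step[OF assms(1) h2]) (auto simp: D2_def D3_def rot_def unrot_def)
  have "(phi e has_sum (T + T + T + T)) (DD \<union> D1 \<union> D2 \<union> D3)"
    by (intro has_sum_Un_disjoint h0 h1 h2 h3) (auto simp: DD_def D1_def D2_def D3_def)
  moreover have "DD \<union> D1 \<union> D2 \<union> D3 = LL"
  proof (rule set_eqI)
    fix p :: "int \<times> int"
    obtain x y where p: "p = (x,y)" by (cases p)
    show "p \<in> DD \<union> D1 \<union> D2 \<union> D3 \<longleftrightarrow> p \<in> LL"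
      unfolding p DD_def D1_def D2_def D3_def by auto
  qed
  ultimately have "(phi e has_sum (T + T + T + T)) LL" by simp
  then have "SS e = 4 * T" unfolding SS_def by (simp add: has_sum_iff)
  then show ?thesis using h0 by simp
qed

definition "DD' = {p::int\<times>int. 0 < fst p \<and> - fst p \<le> snd p \<and> snd p < fst p}"

lemma fund_DD':
  assumes "4 dvd e" "e \<ge> 3"
  shows "(phi e has_sum SS e / 4) DD'"
proof -
  have "((\<lambda>p. cnj (phi e p)) has_sum cnj (SS e / 4)) DD"
    using fund_DD[OF assms] by (simp only: has_sum_cnj_iff)
  then have "((\<lambda>p. phi e (cj p)) has_sum SS e / 4) DD"
    using SS_cnj[of e] by (simp add: phi_cj)
  also have "?this = (phi e has_sum SS e / 4) DD'"
    by (rule has_sum_reindex_bij_witness[of DD cj cj])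
       (auto simp: DD_def DD'_def cj_def)
  finally show ?thesis .
qed


definition odm :: "nat \<times> nat \<Rightarrow> int \<times> int" where
  "odm q = (1 + int (fst q) + int (snd q), int (snd q) - int (fst q))"
definition ev :: "nat \<times> nat \<Rightarrow> int \<times> int" where
  "ev q = (1 + int (fst q) + int (snd q), int (snd q) - int (fst q) + 1)"
definition ev' :: "nat \<times> nat \<Rightarrow> int \<times> int" where
  "ev' q = (1 + int (fst q) + int (snd q), int (snd q) - int (fst q) - 1)"

definition odm_inv :: "int \<times> int \<Rightarrow> nat \<times> nat" where
  "odm_inv p = (nat ((fst p - 1 - snd p) div 2), nat ((fst p - 1 + snd p) div 2))"
definition ev_inv :: "int \<times> int \<Rightarrow> nat \<times> nat" where
  "ev_inv p = (nat ((fst p - snd p) div 2), nat ((fst p + snd p - 2) div 2))"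
definition ev'_inv :: "int \<times> int \<Rightarrow> nat \<times> nat" where
  "ev'_inv p = (nat ((fst p - snd p - 2) div 2), nat ((fst p + snd p) div 2))"

definition "Dodd = {p\<in>DD. odd (fst p + snd p)}"
definition "Dev = {p\<in>DD. even (fst p + snd p)}"
definition "Dev' = {p\<in>DD'. even (fst p + snd p)}"

lemma odm_bij: "((\<lambda>q. g (odm q)) has_sum s) UNIV \<longleftrightarrow> (g has_sum s) Dodd"
proof (rule has_sum_reindex_bij_witness[of UNIV odm_inv odm])
  fix q :: "nat \<times> nat" obtain a b where q: "q = (a,b)" by (cases q)
  show "odm_inv (odm q) = q" unfolding q odm_def odm_inv_def by (simp; presburger)
  show "odm q \<in> Dodd" unfolding q odm_def Dodd_def DD_def by (auto; presburger)
next
  fix p :: "int \<times> int" assume p: "p \<in> Dodd"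
  obtain x y where pp: "p = (x,y)" by (cases p)
  show "odm (odm_inv p) = p" using p unfolding pp odm_def odm_inv_def Dodd_def DD_def by (simp; presburger)
qed auto
lemma ev_bij: "((\<lambda>q. g (ev q)) has_sum s) UNIV \<longleftrightarrow> (g has_sum s) Dev"
proof (rule has_sum_reindex_bij_witness[of UNIV ev_inv ev])
  fix q :: "nat \<times> nat" obtain a b where q: "q = (a,b)" by (cases q)
  show "ev_inv (ev q) = q" unfolding q ev_def ev_inv_def by (simp; presburger)
  show "ev q \<in> Dev" unfolding q ev_def Dev_def DD_def by (auto; presburger)
next
  fix p :: "int \<times> int" assume p: "p \<in> Dev"
  obtain x y where pp: "p = (x,y)" by (cases p)
  show "ev (ev_inv p) = p" using p unfolding pp ev_def ev_inv_def Dev_def DD_def by (simp; presburger)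
qed auto

lemma ev'_bij: "((\<lambda>q. g (ev' q)) has_sum s) UNIV \<longleftrightarrow> (g has_sum s) Dev'"
proof (rule has_sum_reindex_bij_witness[of UNIV ev'_inv ev'])
  fix q :: "nat \<times> nat" obtain a b where q: "q = (a,b)" by (cases q)
  show "ev'_inv (ev' q) = q" unfolding q ev'_def ev'_inv_def by (simp; presburger)
  show "ev' q \<in> Dev'" unfolding q ev'_def Dev'_def DD'_def by (auto; presburger)
next
  fix p :: "int \<times> int" assume p: "p \<in> Dev'"
  obtain x y where pp: "p = (x,y)" by (cases p)
  show "ev' (ev'_inv p) = p" using p unfolding pp ev'_def ev'_inv_def Dev'_def DD'_def by (simp; presburger)
qed auto


lemma lattice_W:
  assumes "4 dvd e" "e \<ge> 3"
  shows "((\<lambda>q. 2 * phi e (odm q) + phi e (ev' q) + phi e (ev q)) has_sum SS e / 2) UNIV"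
proof -
  define A where "A = infsum (phi e) Dodd"
  define B where "B = infsum (phi e) Dev"
  define B' where "B' = infsum (phi e) Dev'"
  have hA: "(phi e has_sum A) Dodd"
    unfolding A_def by (rule has_sum_infsum, rule phi_summable) (use assms in \<open>auto simp: Dodd_def DD_def\<close>)
  have hB: "(phi e has_sum B) Dev"
    unfolding B_def by (rule has_sum_infsum, rule phi_summable) (use assms in \<open>auto simp: Dev_def DD_def\<close>)
  have hB': "(phi e has_sum B') Dev'"
    unfolding B'_def by (rule has_sum_infsum, rule phi_summable) (use assms in \<open>auto simp: Dev'_def DD'_def\<close>)
  have "(phi e has_sum A + B) (Dodd \<union> Dev)"
    by (rule has_sum_Un_disjoint[OF hA hB]) (auto simp: Dodd_def Dev_def)
  moreover have "Dodd \<union> Dev = DD" by (auto simp: Dodd_def Dev_def)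
  ultimately have "(phi e has_sum A + B) DD" by simp
  then have 1: "A + B = SS e / 4" using fund_DD[OF assms] by (rule has_sum_unique)
  have "(phi e has_sum A + B') (Dodd \<union> Dev')"
    by (rule has_sum_Un_disjoint[OF hA hB']) (auto simp: Dodd_def Dev'_def)
  moreover have "Dodd \<union> Dev' = DD'"
  proof (rule set_eqI)
    fix p :: "int \<times> int"
    obtain x y where p: "p = (x,y)" by (cases p)
    show "p \<in> Dodd \<union> Dev' \<longleftrightarrow> p \<in> DD'"
      unfolding p Dodd_def Dev'_def DD_def DD'_def by (auto; presburger)
  qed
  ultimately have "(phi e has_sum A + B') DD'" by simp
  then have 2: "A + B' = SS e / 4" using fund_DD'[OF assms] by (rule has_sum_unique)
  have "((\<lambda>q. 2 * phi e (odm q)) has_sum 2 * A) UNIV"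
    using hA[folded odm_bij] by (rule has_sum_cmult_right)
  moreover have "((\<lambda>q. phi e (ev' q)) has_sum B') UNIV" using hB'[folded ev'_bij] .
  moreover have "((\<lambda>q. phi e (ev q)) has_sum B) UNIV" using hB[folded ev_bij] .
  ultimately have "((\<lambda>q. 2 * phi e (odm q) + phi e (ev' q) + phi e (ev q)) has_sum (2 * A + B' + B)) UNIV"
    by (intro has_sum_add)
  moreover have "2 * A + B' + B = SS e / 2"
  proof -
    have "2 * A + B' + B = (A + B) + (A + B')" by (simp add: algebra_simps)
    also have "\<dots> = SS e / 2" unfolding 1 2 by simp
    finally show ?thesis .
  qed
  ultimately show ?thesis by simp
qed


lemma geom_has_sum:
  fixes x :: "'a::{real_normed_field,banach}"
  assumes "norm x < 1" shows "((\<lambda>n. x ^ n) has_sum 1 / (1 - x)) UNIV"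
  using assms by (intro norm_summable_imp_has_sum)
    (auto simp: norm_power intro!: summable_geometric geometric_sums)

lemma has_sum_prod_nat:
  fixes f g :: "nat \<Rightarrow> 'a::{real_normed_field,banach}"
  assumes hf: "(f has_sum F) UNIV" and hg: "(g has_sum G) UNIV"
    and nf: "(\<lambda>a. norm (f a)) summable_on UNIV" and ng: "(\<lambda>b. norm (g b)) summable_on UNIV"
  shows "((\<lambda>q. f (fst q) * g (snd q)) has_sum F * G) UNIV"
proof -
  have "((\<lambda>q. f (fst q) * g (snd q)) has_sum F * G) (Sigma UNIV (\<lambda>_. UNIV))"
  proof (rule has_sum_SigmaI)
    show "((\<lambda>y. f (fst (x, y)) * g (snd (x, y))) has_sum f x * G) UNIV" for x
      using has_sum_cmult_right[OF hg, of "f x"] by simp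
    show "((\<lambda>x. f x * G) has_sum F * G) UNIV"
      using has_sum_cmult_left[OF hf] by simp
    show "(\<lambda>q. f (fst q) * g (snd q)) summable_on Sigma UNIV (\<lambda>_. UNIV)"
      apply (rule abs_summable_summable)
      apply (rule Infinite_Sum.abs_summable_on_Sigma_iff[THEN iffD2], safe)
      subgoal for x using summable_on_cmult_right[OF ng, of "norm (f x)"] by (simp add: norm_mult)
      subgoal
      proof -
        have "(\<lambda>x. norm (f x) * infsum (\<lambda>y. norm (g y)) UNIV) summable_on UNIV"
          using summable_on_cmult_left[OF nf] by simp
        then show ?thesis
          by (simp add: norm_mult infsum_cmult_right' infsum_nonneg)
      qed
      done
  qed
  then show ?thesis by simp
qed

lemma has_sum_nat_pairs_sums:
  assumes "(h has_sum s) (UNIV :: (nat \<times> nat) set)"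
  shows "(\<lambda>j. h (prod_decode j)) sums s"
proof -
  have "((\<lambda>j. h (prod_decode j)) has_sum s) UNIV"
    using assms by (subst has_sum_reindex_bij_betw[OF bij_prod_decode])
  then show ?thesis by (rule has_sum_imp_sums)
qed

lemma gz_odm: "gz (odm q) = 1 + of_nat (fst q) * (1 - \<i>) + of_nat (snd q) * (1 + \<i>)"
  by (simp add: gz_def odm_def complex_eq_iff)
lemma gz_ev: "gz (ev q) = gz (odm q) + \<i>"
  by (simp add: gz_def odm_def ev_def complex_eq_iff)
lemma gz_ev': "gz (ev' q) = gz (odm q) - \<i>"
  by (simp add: gz_def odm_def ev'_def complex_eq_iff)
lemma Re_gz_odm: "Re (gz (odm q)) = 1 + real (fst q) + real (snd q)"
  by (simp add: gz_def odm_def)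
lemma Re_gz_ev: "Re (gz (ev q)) = 1 + real (fst q) + real (snd q)"
  by (simp add: gz_def ev_def)
lemma Re_gz_ev': "Re (gz (ev' q)) = 1 + real (fst q) + real (snd q)"
  by (simp add: gz_def ev'_def)

definition Fq :: "nat \<Rightarrow> nat \<times> nat \<Rightarrow> real \<Rightarrow> complex" where
  "Fq m q t = of_real t ^ m * (2 * exp (- (gz (odm q) * of_real t)) + exp (- (gz (ev' q) * of_real t))
      + exp (- (gz (ev q) * of_real t))) / 4"

abbreviation XX :: "nat \<Rightarrow> complex \<Rightarrow> real \<Rightarrow> complex" where
  "XX m z t \<equiv> of_real t ^ m * exp (- (z * of_real t))"

lemma Fq_XX: "Fq m q = (\<lambda>t. (2 * XX m (gz (odm q)) t + XX m (gz (ev' q)) t + XX m (gz (ev q)) t) / 4)"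
  by (simp add: Fq_def fun_eq_iff algebra_simps)

lemma Fq_integral:
  shows "set_integrable lborel {0<..} (Fq m q)"
    and "(LINT t:{0<..}|lborel. Fq m q t) =
      fact m / 4 * (2 * phi (Suc m) (odm q) + phi (Suc m) (ev' q) + phi (Suc m) (ev q))"
proof -
  have p: "Re (gz (odm q)) > 0" "Re (gz (ev' q)) > 0" "Re (gz (ev q)) > 0"
    by (simp_all add: Re_gz_odm Re_gz_ev Re_gz_ev' add_pos_nonneg)
  note I1 = mellin_complex[OF p(1), of m] and I2 = mellin_complex[OF p(2), of m]
    and I3 = mellin_complex[OF p(3), of m]
  have i1: "set_integrable lborel {0<..} (\<lambda>t. 2 * XX m (gz (odm q)) t)"
    using I1(1) by auto
  have i12: "set_integrable lborel {0<..} (\<lambda>t. 2 * XX m (gz (odm q)) t + XX m (gz (ev' q)) t)"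
    by (rule set_integral_add(1)[OF i1 I2(1)])
  have i123: "set_integrable lborel {0<..} (\<lambda>t. 2 * XX m (gz (odm q)) t + XX m (gz (ev' q)) t + XX m (gz (ev q)) t)"
    by (rule set_integral_add(1)[OF i12 I3(1)])
  show "set_integrable lborel {0<..} (Fq m q)"
    unfolding Fq_XX using i123 by (rule set_integrable_divide)
  have "(LINT t:{0<..}|lborel. Fq m q t) =
     (LINT t:{0<..}|lborel. 2 * XX m (gz (odm q)) t + XX m (gz (ev' q)) t + XX m (gz (ev q)) t) / 4"
    unfolding Fq_XX by simp
  also have "\<dots> = (2 * (fact m / gz (odm q) ^ Suc m) + fact m / gz (ev' q) ^ Suc m + fact m / gz (ev q) ^ Suc m) / 4"
    by (simp add: set_integral_add(2)[OF i12 I3(1)] set_integral_add(2)[OF i1 I2(1)] I1(2) I2(2) I3(2))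
  also have "\<dots> = fact m / 4 * (2 * phi (Suc m) (odm q) + phi (Suc m) (ev' q) + phi (Suc m) (ev q))"
    by (simp add: phi_def field_simps)
  finally show "(LINT t:{0<..}|lborel. Fq m q t) =
      fact m / 4 * (2 * phi (Suc m) (odm q) + phi (Suc m) (ev' q) + phi (Suc m) (ev q))" .
qed

lemma norm_exp_gz: "norm (exp (- (z * of_real t))) = exp (- (Re z * t))"
  by simp

lemma Fq_norm_le:
  assumes "t > 0"
  shows "norm (Fq m q t) \<le> t ^ m * exp (- ((1 + real (fst q) + real (snd q)) * t))"
proof -
  define c where "c = 1 + real (fst q) + real (snd q)"
  have "norm (2 * exp (- (gz (odm q) * of_real t)) + exp (- (gz (ev' q) * of_real t))
      + exp (- (gz (ev q) * of_real t))) \<le> 2 * exp (- (c * t)) + exp (- (c * t)) + exp (- (c * t))"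
    by (rule order_trans[OF norm_triangle_ineq] order_trans[OF add_mono[OF norm_triangle_ineq order_refl]])+
       (simp add: norm_mult Re_gz_odm Re_gz_ev Re_gz_ev' c_def)
  then have "norm (2 * exp (- (gz (odm q) * of_real t)) + exp (- (gz (ev' q) * of_real t))
      + exp (- (gz (ev q) * of_real t))) / 4 \<le> exp (- (c * t))" by simp
  then have "t ^ m * (norm (2 * exp (- (gz (odm q) * of_real t)) + exp (- (gz (ev' q) * of_real t))
      + exp (- (gz (ev q) * of_real t))) / 4) \<le> t ^ m * exp (- (c * t))"
    using assms by (intro mult_left_mono) auto
  then show ?thesis using assms unfolding c_def[symmetric]
    by (simp add: Fq_def norm_mult norm_divide norm_power)
qed


definition qq :: "real \<Rightarrow> complex" where "qq t = exp (- ((1 - \<i>) * of_real t))"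
definition rr :: "real \<Rightarrow> complex" where "rr t = exp (- ((1 + \<i>) * of_real t))"
definition Kt :: "nat \<Rightarrow> real \<Rightarrow> complex" where
  "Kt m t = of_real t ^ m * of_real (exp (- t)) * (2 + exp (\<i> * of_real t) + exp (- (\<i> * of_real t))) / 4"

lemma exp_odm:
  "exp (- (gz (odm q) * of_real t)) = of_real (exp (- t)) * (qq t ^ fst q * rr t ^ snd q)"
proof -
  have "- (gz (odm q) * of_real t) = - of_real t + of_nat (fst q) * (- ((1 - \<i>) * of_real t))
          + of_nat (snd q) * (- ((1 + \<i>) * of_real t))"
    by (simp add: gz_odm algebra_simps)
  then have "exp (- (gz (odm q) * of_real t)) = exp (- of_real t) * exp (of_nat (fst q) * (- ((1 - \<i>) * of_real t)))
          * exp (of_nat (snd q) * (- ((1 + \<i>) * of_real t)))"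
    by (simp only: exp_add)
  then show ?thesis
    by (simp only: exp_of_nat_mult qq_def rr_def exp_of_real[symmetric] of_real_minus mult.assoc)
qed

lemma Fq_prod: "Fq m q t = Kt m t * (qq t ^ fst q * rr t ^ snd q)"
proof -
  have e1: "exp (- (gz (ev' q) * of_real t)) = exp (- (gz (odm q) * of_real t)) * exp (\<i> * of_real t)"
    by (simp add: gz_ev' algebra_simps flip: exp_add)
  have e2: "exp (- (gz (ev q) * of_real t)) = exp (- (gz (odm q) * of_real t)) * exp (- (\<i> * of_real t))"
    by (simp add: gz_ev algebra_simps flip: exp_add)
  show ?thesis
    unfolding Fq_def Kt_def e1 e2 exp_odm by (simp add: algebra_simps)
qed

lemma Kt_real: "(2 + exp (\<i> * of_real t) + exp (- (\<i> * of_real t))) / 4 = complex_of_real (cos (t / 2) ^ 2)"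
proof -
  have "exp (\<i> * of_real t) + exp (- (\<i> * of_real t)) = 2 * cos (complex_of_real t)"
    by (simp add: cos_exp_eq)
  also have "\<dots> = of_real (2 * cos t)" by (simp add: cos_of_real)
  finally have a: "exp (\<i> * of_real t) + exp (- (\<i> * of_real t)) = of_real (2 * cos t)" .
  have "cos t = cos (2 * (t / 2))" by simp
  also have "\<dots> = 2 * cos (t / 2) ^ 2 - 1" by (rule cos_double_cos)
  finally have b: "cos t = 2 * cos (t / 2) ^ 2 - 1" .
  show ?thesis
    using a b by (simp add: add.assoc)
qed

lemma aux_ring: "(1 - u*E) * (1 - u*E') = 1 - u*(E+E') + (u*u)*(E*E')" for u E E' :: complex
  by algebra

lemma denom_real:
  "(1 - qq t) * (1 - rr t) = complex_of_real (1 - 2 * exp (- t) * cos t + exp (- 2 * t))"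
proof -
  have q: "qq t = of_real (exp (- t)) * exp (\<i> * of_real t)"
    by (simp add: qq_def algebra_simps exp_of_real[symmetric] flip: exp_add)
  have r: "rr t = of_real (exp (- t)) * exp (- (\<i> * of_real t))"
    by (simp add: rr_def algebra_simps exp_of_real[symmetric] flip: exp_add)
  have a: "exp (\<i> * of_real t) + exp (- (\<i> * of_real t)) = of_real (2 * cos t)"
    by (simp add: cos_exp_eq cos_of_real[symmetric])
  have c: "exp (\<i> * of_real t) * exp (- (\<i> * of_real t)) = 1"
    by (simp flip: exp_add)
  have d: "exp (- t) * exp (- t) = exp (- (2 * t))"
    by (simp flip: exp_add)
  have "(1 - qq t) * (1 - rr t) = 1 - of_real (exp (- t)) * (exp (\<i> * of_real t) + exp (- (\<i> * of_real t)))
      + of_real (exp (- t) * exp (- t)) * (exp (\<i> * of_real t) * exp (- (\<i> * of_real t)))"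
    unfolding q r aux_ring of_real_mult by (rule refl)
  also have "\<dots> = complex_of_real (1 - 2 * exp (- t) * cos t + exp (- 2 * t))"
    unfolding a c d by simp
  finally show ?thesis .
qed

lemma norm_qq: "norm (qq t) = exp (- t)" by (simp add: qq_def)
lemma norm_rr: "norm (rr t) = exp (- t)" by (simp add: rr_def)

lemma Fq_pointwise:
  assumes t: "t > 0"
  shows "((\<lambda>q. Fq m q t) has_sum complex_of_real (exp (- t) * f1_i t * t ^ m)) UNIV"
    and "(\<lambda>q. norm (Fq m q t)) summable_on UNIV"
proof -
  have lt: "exp (- t) < 1" using t by simp
  have nq: "norm (qq t) < 1" and nr: "norm (rr t) < 1" using lt by (simp_all add: norm_qq norm_rr)
  have sq: "(\<lambda>a. norm (qq t ^ a)) summable_on UNIV"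
    using geom_has_sum[of "norm (qq t)"] nq by (auto simp: norm_power summable_on_def)
  have sr: "(\<lambda>a. norm (rr t ^ a)) summable_on UNIV"
    using geom_has_sum[of "norm (rr t)"] nr by (auto simp: norm_power summable_on_def)
  have P: "((\<lambda>q. qq t ^ fst q * rr t ^ snd q) has_sum (1 / (1 - qq t)) * (1 / (1 - rr t))) UNIV"
    by (rule has_sum_prod_nat[OF geom_has_sum[OF nq] geom_has_sum[OF nr] sq sr])
  have "((\<lambda>q. Kt m t * (qq t ^ fst q * rr t ^ snd q)) has_sum Kt m t * ((1 / (1 - qq t)) * (1 / (1 - rr t)))) UNIV"
    by (rule has_sum_cmult_right[OF P])
  moreover have "Kt m t * ((1 / (1 - qq t)) * (1 / (1 - rr t))) = complex_of_real (exp (- t) * f1_i t * t ^ m)"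
  proof -
    have "Kt m t = of_real t ^ m * of_real (exp (- t)) * complex_of_real (cos (t / 2) ^ 2)"
      unfolding Kt_def Kt_real[symmetric] by simp
    moreover have "(1 / (1 - qq t)) * (1 / (1 - rr t)) = 1 / complex_of_real (1 - 2 * exp (- t) * cos t + exp (- 2 * t))"
      by (subst denom_real[symmetric]) simp
    ultimately show ?thesis by (simp add: f1_i_def)
  qed
  ultimately show "((\<lambda>q. Fq m q t) has_sum complex_of_real (exp (- t) * f1_i t * t ^ m)) UNIV"
    by (simp add: Fq_prod)
  have nsq: "norm (norm (qq t)) < 1" and nsr: "norm (norm (rr t)) < 1" using nq nr by auto
  have sq': "(\<lambda>a. norm (norm (qq t) ^ a)) summable_on UNIV"
    using sq by (simp add: norm_power)
  have sr': "(\<lambda>a. norm (norm (rr t) ^ a)) summable_on UNIV"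
    using sr by (simp add: norm_power)
  have "((\<lambda>q. norm (qq t) ^ fst q * norm (rr t) ^ snd q) has_sum (1 / (1 - norm (qq t))) * (1 / (1 - norm (rr t)))) UNIV"
    by (rule has_sum_prod_nat[OF geom_has_sum[OF nsq] geom_has_sum[OF nsr] sq' sr'])
  then have "(\<lambda>q. norm (qq t) ^ fst q * norm (rr t) ^ snd q) summable_on UNIV"
    by (auto simp: summable_on_def)
  then have "(\<lambda>q. norm (Kt m t) * (norm (qq t) ^ fst q * norm (rr t) ^ snd q)) summable_on UNIV"
    by (rule summable_on_cmult_right)
  then show "(\<lambda>q. norm (Fq m q t)) summable_on UNIV"
    by (simp add: Fq_prod norm_mult norm_power)
qed


lemma norm_gz_odm_le: "norm (gz (odm q)) \<le> 2 * (1 + real (fst q) + real (snd q))"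
proof -
  have "norm (gz (odm q)) \<le> \<bar>Re (gz (odm q))\<bar> + \<bar>Im (gz (odm q))\<bar>" by (rule cmod_le)
  also have "\<dots> \<le> 2 * (1 + real (fst q) + real (snd q))"
    by (simp add: gz_def odm_def)
  finally show ?thesis .
qed

lemma norm_phi_odm_summable:
  assumes "e \<ge> 3"
  shows "summable (\<lambda>j. norm (phi e (odm (prod_decode j))))"
proof -
  have "(\<lambda>p. norm (phi e p)) summable_on Dodd"
    using phi_abs_summable[OF assms] by (rule summable_on_subset) (auto simp: Dodd_def DD_def)
  then obtain s where "((\<lambda>p. norm (phi e p)) has_sum s) Dodd" by (auto simp: summable_on_def)
  then have "((\<lambda>q. norm (phi e (odm q))) has_sum s) UNIV" using odm_bij[of "\<lambda>p. norm (phi e p)"] by simp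
  then have "(\<lambda>j. norm (phi e (odm (prod_decode j)))) sums s" by (rule has_sum_nat_pairs_sums)
  then show ?thesis by (auto simp: sums_iff)
qed

lemma int_norm_Fq_le:
  "(LINT t:{0<..}|lborel. norm (Fq m q t)) \<le> fact m * 2 ^ Suc m * norm (phi (Suc m) (odm q))"
proof -
  define c where "c = 1 + real (fst q) + real (snd q)"
  have c: "c > 0" by (simp add: c_def add_pos_nonneg)
  have i: "set_integrable lborel {0<..} (\<lambda>t. norm (Fq m q t))"
    using Fq_integral(1)[of m q] by (rule set_integrable_norm)
  have "(LINT t:{0<..}|lborel. norm (Fq m q t)) \<le> (LINT t:{0<..}|lborel. t ^ m * exp (- (c * t)))"
    by (rule set_integral_mono[OF i mellin_real(1)[OF c]]) (use Fq_norm_le in \<open>auto simp: c_def\<close>)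
  also have "\<dots> = fact m / c ^ Suc m" by (rule mellin_real(2)[OF c])
  also have "\<dots> \<le> fact m * 2 ^ Suc m * norm (phi (Suc m) (odm q))"
  proof -
    have g0: "norm (gz (odm q)) > 0"
    proof -
      have "Re (gz (odm q)) > 0" by (simp add: Re_gz_odm add_pos_nonneg)
      then have "gz (odm q) \<noteq> 0" by auto
      then show ?thesis by simp
    qed
    have "norm (gz (odm q)) ^ Suc m \<le> (2 * c) ^ Suc m"
      using norm_gz_odm_le[of q] by (intro power_mono) (auto simp: c_def)
    then have "1 / c ^ Suc m \<le> 2 ^ Suc m / norm (gz (odm q)) ^ Suc m"
      using c g0 by (simp add: divide_simps power_mult_distrib mult.commute)
    then have "fact m * (1 / c ^ Suc m) \<le> fact m * (2 ^ Suc m / norm (gz (odm q)) ^ Suc m)"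
      by (intro mult_left_mono) auto
    then show ?thesis by (simp add: norm_phi)
  qed
  finally show ?thesis .
qed

definition GG :: "nat \<Rightarrow> real \<Rightarrow> real" where
  "GG m t = exp (- t) * f1_i t * t ^ m"

lemma main_integral:
  assumes e4: "4 dvd Suc m" and m2: "m \<ge> 2"
  shows "set_integrable lborel {0<..} (GG m)"
    and "complex_of_real (LINT t:{0<..}|lborel. GG m t) = fact m * SS (Suc m) / 8"
proof -
  define f where "f j t = indicator {0<..} t *\<^sub>R Fq m (prod_decode j) t" for j t
  have int: "integrable lborel (f j)" for j
    using Fq_integral(1)[of m "prod_decode j"] unfolding set_integrable_def f_def .
  have summ: "AE t in lborel. summable (\<lambda>j. norm (f j t))"
  proof (rule AE_I2)
    fix t :: real
    show "summable (\<lambda>j. norm (f j t))"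
    proof (cases "t > 0")
      case True
      from Fq_pointwise(2)[OF True, of m] obtain s where
        "((\<lambda>q. norm (Fq m q t)) has_sum s) UNIV" by (auto simp: summable_on_def)
      then have "(\<lambda>j. norm (Fq m (prod_decode j) t)) sums s" by (rule has_sum_nat_pairs_sums)
      then show ?thesis using True by (auto simp: f_def sums_iff)
    next
      case False then show ?thesis by (simp add: f_def)
    qed
  qed
  have intnorm: "integral\<^sup>L lborel (\<lambda>t. norm (f j t)) = (LINT t:{0<..}|lborel. norm (Fq m (prod_decode j) t))" for j
    unfolding f_def set_lebesgue_integral_def
    by (intro Bochner_Integration.integral_cong) (auto simp: indicator_def)
  have sumint: "summable (\<lambda>j. integral\<^sup>L lborel (\<lambda>t. norm (f j t)))"
  proof (rule summable_comparison_test')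
    show "summable (\<lambda>j. fact m * 2 ^ Suc m * norm (phi (Suc m) (odm (prod_decode j))))"
      using norm_phi_odm_summable[of "Suc m"] m2 by (intro summable_mult) auto
    show "norm (integral\<^sup>L lborel (\<lambda>t. norm (f j t))) \<le> fact m * 2 ^ Suc m * norm (phi (Suc m) (odm (prod_decode j)))" for j
    proof -
      have "integral\<^sup>L lborel (\<lambda>t. norm (f j t)) \<ge> 0" by (rule integral_nonneg_AE) auto
      then show ?thesis using int_norm_Fq_le[of m "prod_decode j"] by (simp add: intnorm)
    qed
  qed
  have pw: "(\<Sum>j. f j t) = indicator {0<..} t *\<^sub>R complex_of_real (GG m t)" for t
  proof (cases "t > 0")
    case True
    have "(\<lambda>j. Fq m (prod_decode j) t) sums complex_of_real (GG m t)"
      using has_sum_nat_pairs_sums[OF Fq_pointwise(1)[OF True, of m]] by (simp add: GG_def)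
    then show ?thesis using True by (simp add: f_def sums_iff)
  next
    case False then show ?thesis by (simp add: f_def)
  qed
  have vals: "integral\<^sup>L lborel (f j) = fact m / 4 * (2 * phi (Suc m) (odm (prod_decode j))
       + phi (Suc m) (ev' (prod_decode j)) + phi (Suc m) (ev (prod_decode j)))" for j
    using Fq_integral(2)[of m "prod_decode j"] unfolding f_def set_lebesgue_integral_def .
  have W: "(\<lambda>j. 2 * phi (Suc m) (odm (prod_decode j)) + phi (Suc m) (ev' (prod_decode j))
        + phi (Suc m) (ev (prod_decode j))) sums (SS (Suc m) / 2)"
    using has_sum_nat_pairs_sums[OF lattice_W[OF e4]] m2 by simp
  have I1: "integrable lborel (\<lambda>t. \<Sum>j. f j t)"
    by (rule integrable_suminf[OF int summ sumint])
  have I2: "(\<lambda>j. integral\<^sup>L lborel (f j)) sums (integral\<^sup>L lborel (\<lambda>t. \<Sum>j. f j t))"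
    by (rule sums_integral[OF int summ sumint])
  have "(\<lambda>j. integral\<^sup>L lborel (f j)) sums (fact m / 4 * (SS (Suc m) / 2))"
    unfolding vals by (rule sums_mult[OF W])
  then have val: "integral\<^sup>L lborel (\<lambda>t. \<Sum>j. f j t) = fact m * SS (Suc m) / 8"
    using I2 sums_unique2 by fastforce
  have I1': "integrable lborel (\<lambda>t. complex_of_real (indicator {0<..} t *\<^sub>R GG m t))"
    using I1 unfolding pw by (simp add: indicator_def scaleR_conv_of_real)
  then show "set_integrable lborel {0<..} (GG m)"
    unfolding set_integrable_def complex_of_real_integrable_eq .
  have "complex_of_real (LINT t:{0<..}|lborel. GG m t)
      = integral\<^sup>L lborel (\<lambda>t. complex_of_real (indicator {0<..} t *\<^sub>R GG m t))"
    unfolding set_lebesgue_integral_def by (subst integral_complex_of_real[symmetric]) simp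
  also have "\<dots> = integral\<^sup>L lborel (\<lambda>t. \<Sum>j. f j t)"
    unfolding pw by (intro Bochner_Integration.integral_cong) (auto simp: indicator_def)
  finally show "complex_of_real (LINT t:{0<..}|lborel. GG m t) = fact m * SS (Suc m) / 8"
    using val by simp
qed


lemma lat_pt_gz: "lat_pt p = complex_of_real omega_t * gz p"
  by (simp add: lat_pt_def gz_def)

lemma summable_on_prod_nonneg:
  fixes \<alpha> :: "nat \<Rightarrow> real" and \<beta> :: "'a \<Rightarrow> real"
  assumes "\<beta> summable_on A" "\<alpha> summable_on UNIV" "\<And>p. \<beta> p \<ge> 0" "\<And>j. \<alpha> j \<ge> 0"
  shows "(\<lambda>(p,j). \<beta> p * \<alpha> j) summable_on (A \<times> UNIV)"
proof -
  have "(\<lambda>x. \<beta> (fst x) * \<alpha> (snd x)) summable_on Sigma A (\<lambda>_. UNIV)"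
  proof (rule summable_on_SigmaI)
    show "((\<lambda>y. \<beta> (fst (x, y)) * \<alpha> (snd (x, y))) has_sum \<beta> x * infsum \<alpha> UNIV) UNIV" for x
      using has_sum_cmult_right[OF assms(2)[unfolded summable_iff_has_sum_infsum], of "\<beta> x"] by simp
    show "(\<lambda>x. \<beta> x * infsum \<alpha> UNIV) summable_on A"
      using summable_on_cmult_left[OF assms(1)] by simp
  qed (use assms in auto)
  then show ?thesis by (simp add: case_prod_unfold)
qed

lemma deriv_geom_term:
  fixes z w :: complex
  assumes "norm z < norm w"
  shows "((\<lambda>j. of_nat (Suc j) * z ^ j / w ^ (j + 2)) sums (1 / (z - w) ^ 2)) \<and>
         summable (\<lambda>j. norm (of_nat (Suc j) * z ^ j / w ^ (j + 2)))"
proof -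
  have w0: "w \<noteq> 0" using assms by auto
  have n1: "norm (z / w) < 1" using assms w0 by (simp add: norm_divide divide_simps)
  have s: "(\<lambda>j. of_nat (Suc j) * (z / w) ^ j) sums (1 / (1 - z / w) ^ 2)"
    by (rule geometric_deriv_sums[OF n1])
  have "(\<lambda>j. of_nat (Suc j) * (z / w) ^ j / w ^ 2) sums (1 / (1 - z / w) ^ 2 / w ^ 2)"
    by (rule sums_divide[OF s])
  moreover have "of_nat (Suc j) * (z / w) ^ j / w ^ 2 = of_nat (Suc j) * z ^ j / w ^ (j + 2)" for j
    using w0 by (simp add: power_divide power_add power2_eq_square)
  moreover have "1 / (1 - z / w) ^ 2 / w ^ 2 = 1 / (z - w) ^ 2"
  proof -
    have "(1 - z / w) * w = w - z" using w0 by (simp add: field_simps)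
    then have "((1 - z / w) ^ 2) * w ^ 2 = (z - w) ^ 2"
      by (metis power_mult_distrib minus_diff_eq power2_minus)
    then show ?thesis by (simp add: divide_divide_eq_left)
  qed
  ultimately have A: "(\<lambda>j. of_nat (Suc j) * z ^ j / w ^ (j + 2)) sums (1 / (z - w) ^ 2)" by simp
  have n1': "norm (norm (z / w)) < 1" using n1 by simp
  have sm: "summable (\<lambda>j. of_nat (Suc j) * norm (z / w) ^ j / norm w ^ 2)"
    using summable_divide[OF sums_summable[OF geometric_deriv_sums[OF n1']]] .
  have eq: "of_nat (Suc j) * norm (z / w) ^ j / norm w ^ 2 = norm (of_nat (Suc j) * z ^ j / w ^ (j + 2))" for j
  proof -
    have "cmod (1 + complex_of_nat j) = 1 + real j" using norm_of_nat[of "Suc j"] by simp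
    then show ?thesis using w0 by (simp add: norm_mult norm_divide norm_power power_divide power_add power2_eq_square mult_ac)
  qed
  from sm have "summable (\<lambda>j. norm (of_nat (Suc j) * z ^ j / w ^ (j + 2)))" by (simp only: eq)
  then show ?thesis using A by simp
qed


lemma cmod_1_of_nat [simp]: "cmod (1 + complex_of_nat j) = 1 + real j"
  using norm_of_nat[of "Suc j"] by simp

definition AA :: "nat \<Rightarrow> complex" where
  "AA j = (if j = 0 then 0 else of_nat (Suc j) * infsum (\<lambda>p. 1 / lat_pt p ^ (j + 2)) LL)"

definition cc :: "complex \<Rightarrow> int \<times> int \<Rightarrow> nat \<Rightarrow> complex" where
  "cc z p j = (if j = 0 then 0 else of_nat (Suc j) * z ^ j / lat_pt p ^ (j + 2))"

lemma norm_lat_pt: "norm (lat_pt p) = \<bar>omega_t\<bar> * norm (gz p)"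
  by (simp add: lat_pt_gz norm_mult)

lemma norm_lat_ge: "p \<in> LL \<Longrightarrow> norm (lat_pt p) \<ge> \<bar>omega_t\<bar>"
  using norm_gz_ge1[of p] mult_left_mono[of 1 "norm (gz p)" "\<bar>omega_t\<bar>"] by (auto simp: norm_lat_pt)

lemma cc_inner:
  assumes p: "p \<in> LL" and z: "norm z < \<bar>omega_t\<bar>"
  shows "((\<lambda>j. cc z p j) has_sum (1 / (z - lat_pt p) ^ 2 - 1 / lat_pt p ^ 2)) UNIV"
proof -
  define w where "w = lat_pt p"
  have zw: "norm z < norm w" using norm_lat_ge[OF p] z by (simp add: w_def)
  note D = deriv_geom_term[OF zw]
  define g where "g j = of_nat (Suc j) * z ^ j / w ^ (j + 2)" for j
  have ccg: "cc z p j = g j - (if j = 0 then g j else 0)" for j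
    by (simp add: cc_def g_def w_def)
  have "(\<lambda>j. g j - (if j = 0 then g j else 0)) sums (1 / (z - w) ^ 2 - g 0)"
    using sums_diff[OF D[THEN conjunct1, folded g_def] sums_single[of 0 g]] .
  then have S: "(\<lambda>j. cc z p j) sums (1 / (z - w) ^ 2 - 1 / w ^ 2)"
    by (simp add: ccg g_def power2_eq_square)
  have "summable (\<lambda>j. norm (cc z p j))"
  proof (rule summable_comparison_test')
    show "summable (\<lambda>j. norm (g j))" using D g_def by simp
    show "norm (norm (cc z p j)) \<le> norm (g j)" for j
      by (simp add: cc_def g_def w_def)
  qed
  then show ?thesis using S by (simp add: w_def norm_summable_imp_has_sum)
qed

lemma cc_joint:
  assumes om: "omega_t \<noteq> 0" and z: "norm z < \<bar>omega_t\<bar>"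
  shows "(\<lambda>(p,j). cc z p j) summable_on (LL \<times> UNIV)"
proof -
  define W where "W = \<bar>omega_t\<bar>"
  have W0: "W > 0" using om by (simp add: W_def)
  define \<alpha> where "\<alpha> j = of_nat (Suc j) * (norm z / W) ^ j / W ^ 2" for j
  define \<beta> where "\<beta> p = 1 / norm (gz p) ^ 3" for p
  have r1: "norm (norm z / W) < 1" using z W0 by (simp add: W_def)
  have a0: "\<alpha> j \<ge> 0" for j
    unfolding \<alpha>_def using W0 by (intro divide_nonneg_pos mult_nonneg_nonneg zero_le_power) auto
  have "summable \<alpha>"
    unfolding \<alpha>_def by (rule summable_divide[OF sums_summable[OF geometric_deriv_sums[OF r1]]])
  then have sa: "\<alpha> summable_on UNIV"
    by (subst summable_on_UNIV_nonneg_real_iff) (auto simp: a0)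
  have sb: "\<beta> summable_on LL" unfolding \<beta>_def by (rule lat3_summable)
  have P: "(\<lambda>(p,j). \<beta> p * \<alpha> j) summable_on (LL \<times> UNIV)"
    by (rule summable_on_prod_nonneg[OF sb sa]) (auto simp: a0 \<beta>_def)
  have bound: "norm (cc z p j) \<le> \<beta> p * \<alpha> j" if "p \<in> LL" for p j
  proof (cases "j = 0")
    case True then show ?thesis by (simp add: cc_def \<alpha>_def \<beta>_def W0)
  next
    case False
    have g1: "norm (gz p) \<ge> 1" using norm_gz_ge1[of p] that by auto
    have "norm (gz p) ^ 3 \<le> norm (gz p) ^ (j + 2)" using False g1 by (intro power_increasing) auto
    then have "W ^ (j + 2) * norm (gz p) ^ 3 \<le> W ^ (j + 2) * norm (gz p) ^ (j + 2)"
      using W0 by (intro mult_left_mono) auto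
    then have "of_nat (Suc j) * norm z ^ j / (W ^ (j + 2) * norm (gz p) ^ (j + 2))
        \<le> of_nat (Suc j) * norm z ^ j / (W ^ (j + 2) * norm (gz p) ^ 3)"
    proof -
      have gp: "norm (gz p) > 0" using g1 by linarith
      show ?thesis
        by (rule divide_left_mono) (use \<open>W ^ (j + 2) * norm (gz p) ^ 3 \<le> W ^ (j + 2) * norm (gz p) ^ (j + 2)\<close> W0 gp in \<open>auto intro!: mult_pos_pos zero_less_power\<close>)
    qed
    moreover have "norm (cc z p j) = of_nat (Suc j) * norm z ^ j / (W ^ (j + 2) * norm (gz p) ^ (j + 2))"
      using False by (simp add: cc_def norm_mult norm_divide norm_power norm_lat_pt W_def power_mult_distrib mult_ac)
    moreover have "\<beta> p * \<alpha> j = of_nat (Suc j) * norm z ^ j / (W ^ (j + 2) * norm (gz p) ^ 3)"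
      using W0 by (simp add: \<alpha>_def \<beta>_def power_divide power_add field_simps power2_eq_square)
    ultimately show ?thesis by simp
  qed
  have "(\<lambda>x. norm ((\<lambda>(p,j). cc z p j) x)) summable_on (LL \<times> UNIV)"
    by (rule Infinite_Sum.abs_summable_on_comparison_test'[OF P]) (use bound in auto)
  then show ?thesis by (rule abs_summable_summable)
qed

lemma wp_expansion:
  assumes om: "omega_t \<noteq> 0" and z: "norm z < \<bar>omega_t\<bar>"
  shows "((\<lambda>j. AA j * z ^ j) has_sum wp_reg z) UNIV"
proof -
  have J: "(\<lambda>(p,j). cc z p j) summable_on (LL \<times> UNIV)" by (rule cc_joint[OF om z])
  have J': "(\<lambda>(j,p). cc z p j) summable_on (UNIV \<times> LL)"
    using J by (subst summable_on_swap) (simp add: case_prod_unfold)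
  have "wp_reg z = infsum (\<lambda>p. infsum (\<lambda>j. cc z p j) UNIV) LL"
    unfolding wp_reg_def
    by (intro infsum_cong) (use cc_inner[OF _ z] in \<open>auto simp: has_sum_iff\<close>)
  also have "\<dots> = infsum (\<lambda>j. infsum (\<lambda>p. cc z p j) LL) UNIV"
    by (rule infsum_swap_banach[OF J])
  also have "\<dots> = infsum (\<lambda>j. AA j * z ^ j) UNIV"
  proof (rule infsum_cong)
    fix j :: nat
    show "infsum (\<lambda>p. cc z p j) LL = AA j * z ^ j"
    proof (cases "j = 0")
      case True then show ?thesis by (simp add: cc_def AA_def)
    next
      case False
      have "infsum (\<lambda>p. cc z p j) LL = infsum (\<lambda>p. (of_nat (Suc j) * z ^ j) * (1 / lat_pt p ^ (j + 2))) LL"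
        using False by (intro infsum_cong) (simp add: cc_def)
      also have "\<dots> = (of_nat (Suc j) * z ^ j) * infsum (\<lambda>p. 1 / lat_pt p ^ (j + 2)) LL"
        by (rule infsum_cmult_right')
      finally show ?thesis using False by (simp add: AA_def)
    qed
  qed
  finally have eq: "wp_reg z = infsum (\<lambda>j. AA j * z ^ j) UNIV" .
  have "(\<lambda>j. infsum (\<lambda>p. cc z p j) LL) summable_on UNIV"
    using summable_on_Sigma_banach[of "\<lambda>j p. cc z p j" UNIV "\<lambda>_. LL"] J' by simp
  moreover have "infsum (\<lambda>p. cc z p j) LL = AA j * z ^ j" for j
  proof (cases "j = 0")
    case True then show ?thesis by (simp add: cc_def AA_def)
  next
    case False
    have "infsum (\<lambda>p. cc z p j) LL = infsum (\<lambda>p. (of_nat (Suc j) * z ^ j) * (1 / lat_pt p ^ (j + 2))) LL"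
      using False by (intro infsum_cong) (simp add: cc_def)
    also have "\<dots> = (of_nat (Suc j) * z ^ j) * infsum (\<lambda>p. 1 / lat_pt p ^ (j + 2)) LL"
      by (rule infsum_cmult_right')
    finally show ?thesis using False by (simp add: AA_def)
  qed
  ultimately have "(\<lambda>j. AA j * z ^ j) summable_on UNIV" by simp
  then show ?thesis using eq by (simp add: has_sum_iff)
qed

lemma wp_fps:
  assumes om: "omega_t \<noteq> 0"
  shows "wp_reg has_fps_expansion Abs_fps AA"
  unfolding has_fps_expansion_def
proof
  define r where "r = \<bar>omega_t\<bar> / 2"
  have r: "r > 0" "norm (complex_of_real r) < \<bar>omega_t\<bar>" using om by (auto simp: r_def)
  have "summable (\<lambda>n. AA n * complex_of_real r ^ n)"
    using wp_expansion[OF om r(2)] by (intro summable_on_imp_summable) (auto simp: summable_on_def)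
  then have "conv_radius AA \<ge> norm (complex_of_real r)" by (rule conv_radius_geI)
  then show "fps_conv_radius (Abs_fps AA) > 0"
    using r(1) unfolding fps_conv_radius_def by (simp add: order_less_le_trans[of 0 "ereal r"])
  have "eventually (\<lambda>z. z \<in> ball 0 \<bar>omega_t\<bar>) (nhds 0)"
    using om by (intro eventually_nhds_in_open) auto
  then show "eventually (\<lambda>z. eval_fps (Abs_fps AA) z = wp_reg z) (nhds 0)"
  proof eventually_elim
    case (elim z)
    then have "norm z < \<bar>omega_t\<bar>" by simp
    from has_sum_imp_sums[OF wp_expansion[OF om this]]
    show ?case by (simp add: eval_fps_def sums_iff)
  qed
qed

lemma deriv_wp:
  assumes om: "omega_t \<noteq> 0"
  shows "(deriv ^^ j) wp_reg 0 = fact j * AA j"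
  using fps_nth_fps_expansion[OF wp_fps[OF om], of j] by (simp add: field_simps)


lemma Hurwitz_formula:
  assumes om: "omega_t \<noteq> 0" and n: "n \<ge> 3"
  shows "Hurwitz n = of_nat n / 2 ^ n * (fact (n - 1) * SS n / complex_of_real omega_t ^ n)"
proof -
  have j: "n - 2 \<noteq> 0" "Suc (n - 2) = n - 1" "n - 2 + 2 = n" using n by auto
  have "infsum (\<lambda>p. 1 / lat_pt p ^ n) LL = infsum (\<lambda>p. (1 / complex_of_real omega_t ^ n) * phi n p) LL"
    by (intro infsum_cong) (simp add: lat_pt_gz phi_def power_mult_distrib)
  also have "\<dots> = (1 / complex_of_real omega_t ^ n) * SS n"
    unfolding SS_def by (rule infsum_cmult_right')
  finally have I: "infsum (\<lambda>p. 1 / lat_pt p ^ n) LL = SS n / complex_of_real omega_t ^ n" by simp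
  have F: "fact (n - 2) * of_nat (n - 1) = (fact (n - 1) :: complex)"
    using j(2) by (metis fact_Suc mult.commute of_nat_fact of_nat_mult)
  have "Hurwitz n = of_nat n / 2 ^ n * (fact (n - 2) * AA (n - 2))"
    unfolding Hurwitz_def deriv_wp[OF om] ..
  also have "AA (n - 2) = of_nat (n - 1) * (SS n / complex_of_real omega_t ^ n)"
    unfolding AA_def using j I by simp
  finally show ?thesis using F by (simp add: mult.assoc[symmetric])
qed

lemma deriv_zero_fun: "(deriv ^^ j) (\<lambda>_::complex. 0 :: complex) = (\<lambda>_. 0)"
  by (induction j) auto

lemma wp_reg_omega0: assumes "omega_t = 0" shows "wp_reg = (\<lambda>_. 0)"
proof
  fix z :: complex
  have "wp_reg z = infsum (\<lambda>_. 1 / z ^ 2) LL"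
    unfolding wp_reg_def using assms by (simp add: lat_pt_def)
  also have "\<dots> = 0"
  proof (cases "z = 0")
    case False
    have inf: "infinite LL"
    proof -
      have "infinite (UNIV :: (int \<times> int) set)" by (simp add: finite_prod)
      then show ?thesis by (intro Diff_infinite_finite) auto
    qed
    have "\<not> (\<lambda>_. 1 / z ^ 2) summable_on LL"
    proof
      assume "(\<lambda>_. 1 / z ^ 2) summable_on LL"
      then have "(\<lambda>x. norm ((\<lambda>_. 1 / z ^ 2) x)) summable_on LL"
        by (rule summable_on_iff_abs_summable_on_complex[THEN iffD1])
      then have "(\<lambda>_. norm (1 / z ^ 2)) summable_on LL" by simp
      moreover have "norm (1 / z ^ 2) \<noteq> 0" using False by simp
      ultimately show False using infsum_diverge_constant[OF inf] by blast
    qed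
    then show ?thesis by (simp add: infsum_not_exists)
  qed simp
  finally show "wp_reg z = 0" .
qed

theorem theorem14:
  fixes k :: nat
  assumes "k \<ge> 1"
  shows "Hurwitz (2 * k + 2) =
    complex_of_real (2 * real (k + 1) / (4 ^ k * omega_t ^ (2 * k + 2))
      * (1 + (-1) ^ (k + 1))
      * integral {0..} (\<lambda>t. exp (-t) * f1_i t * t ^ (2 * k + 1)))"
proof (cases "omega_t = 0")
  case True
  have "Hurwitz (2 * k + 2) = 0"
    unfolding Hurwitz_def wp_reg_omega0[OF True] deriv_zero_fun by simp
  then show ?thesis using True by simp
next
  case om: False
  define n where "n = 2 * k + 2"
  have n3: "n \<ge> 3" using assms by (simp add: n_def)
  have H: "Hurwitz n = of_nat n / 2 ^ n * (fact (n - 1) * SS n / complex_of_real omega_t ^ n)"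
    by (rule Hurwitz_formula[OF om n3])
  show ?thesis
  proof (cases "even k")
    case True
    have "n mod 4 = 2" using True unfolding n_def by presburger
    then have "SS n = 0" by (rule SS_zero)
    then have "Hurwitz n = 0" using H by simp
    moreover have "(1 + (-1) ^ (k + 1) :: real) = 0" using True by simp
    ultimately show ?thesis by (simp add: n_def)
  next
    case False
    define m where "m = 2 * k + 1"
    have e4: "4 dvd Suc m" using False unfolding m_def by presburger
    have m2: "m \<ge> 2" using assms by (simp add: m_def)
    note MI = main_integral[OF e4 m2]
    have "(LINT t:{0<..}|lborel. GG m t) = integral {0<..} (GG m)"
      by (rule set_borel_integral_eq_integral(2)[OF MI(1)])
    also have "\<dots> = integral {0..} (GG m)"
      by (rule integral_spike_set) (auto intro: negligible_subset[OF negligible_sing[of 0]])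
    finally have L: "(LINT t:{0<..}|lborel. GG m t) = integral {0..} (GG m)" .
    have G: "GG m = (\<lambda>t. exp (-t) * f1_i t * t ^ (2 * k + 1))" by (rule ext) (simp add: GG_def m_def)
    have I0: "complex_of_real (integral {0..} (GG m)) = fact m * SS (Suc m) / 8"
      using MI(2) L by simp
    then have I: "complex_of_real (integral {0..} (\<lambda>t. exp (-t) * f1_i t * t ^ (2 * k + 1)))
        = fact m * SS (Suc m) / 8" unfolding G .
    have sgn: "(1 + (-1) ^ (k + 1) :: real) = 2" using False by simp
    have nm: "Suc m = n" "n - 1 = m" by (simp_all add: m_def n_def)
    have "complex_of_real (2 * real (k + 1) / (4 ^ k * omega_t ^ (2 * k + 2))
      * (1 + (-1) ^ (k + 1)) * integral {0..} (\<lambda>t. exp (-t) * f1_i t * t ^ (2 * k + 1)))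
      = complex_of_real (2 * real (k + 1) / (4 ^ k * omega_t ^ n) * 2)
        * complex_of_real (integral {0..} (\<lambda>t. exp (-t) * f1_i t * t ^ (2 * k + 1)))"
      unfolding sgn n_def by simp
    also have "\<dots> = complex_of_real (2 * real (k + 1) / (4 ^ k * omega_t ^ n) * 2) * (fact m * SS n / 8)"
      unfolding I nm ..
    also have "\<dots> = of_nat n / 2 ^ n * (fact (n - 1) * SS n / complex_of_real omega_t ^ n)"
    proof -
      have p: "(2::complex) ^ n = 4 * 4 ^ k" by (simp add: n_def power_add power_mult)
      show ?thesis unfolding nm p using om
        by (simp add: n_def field_simps)
    qed
    finally show ?thesis using H by (simp add: n_def)
  qed
qed


end
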